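(* Let $\mathcal{H}$ be the directed hypergraph on $\{1,2,3\}$ with hyperedges $$\mathcal{E}^{(2)}=\{(\{2\},\{1\}),(\{1\},\{2\}),(\{2\},\{3\})\},\qquad \mathcal{E}^{(3)}=\{(\{2,3\},\{1\}),(\{1,3\},\{2\}),(\{1,2\},\{3\})\},$$ and no hyperedges of other orders, so that the network dynamical system with homogeneous coupling reads $$\dot x_1=F(x_1)+G^{(2)}(x_1;x_2)+G^{(3)}(x_1;x_2,x_3),\ \ \dot x_2=F(x_2)+G^{(2)}(x_2;x_1)+G^{(3)}(x_2;x_1,x_3),\ \ \dot x_3=F(x_3)+G^{(2)}(x_3;x_2)+G^{(3)}(x_3;x_1,x_2).$$ For every choice of $F,G^{(2)},G^{(3)}$ the subspaces $\Delta$, $S_2$, $S_3$ are dynamically invariant. Moreover, there exist smooth $F$, $G^{(2)}$, $G^{(3)}$ (with $G^{(3)}$ symmetric in its last two arguments) such that this system realizes the Field cycle: it has two distinct hyperbolic equilibria $\xi_1,\xi_2\in\Delta$, a heteroclinic trajectory from $\xi_1$ to $\xi_2$ contained in $S_2\setminus\Delta$ and a heteroclinic trajectory from $\xi_2$ to $\xi_1$ contained in $S_3\setminus\Delta$.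
   Context: $\Delta=\{x_1=x_2=x_3\}$, $S_1=\{x_2=x_3\}$, $S_2=\{x_1=x_3\}$, $S_3=\{x_1=x_2\}$ in $\mathbb{R}^3$. $F:\mathbb R\to\mathbb R$, $G^{(2)}:\mathbb R^2\to\mathbb R$, $G^{(3)}:\mathbb R^3\to\mathbb R$ are smooth, each coupling function depending nontrivially on its tail (non-first) arguments. A heteroclinic trajectory from $\xi$ to $\xi'$ is a solution $x(t)$, $t\in\mathbb R$, with $x(t)\to\xi$ as $t\to-\infty$ and $x(t)\to\xi'$ as $t\to+\infty$. An equilibrium is hyperbolic if its Jacobian has no eigenvalue with zero real part. *)

theory Defs
  imports "HOL-Analysis.Analysis"
begin

text \<open>Smoothness (C-infinity): there is a family of continuous functions containing f
  and closed under taking all partial derivatives (along basis directions).\<close>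
definition smooth_fun :: "('a::euclidean_space \<Rightarrow> real) \<Rightarrow> bool" where
  "smooth_fun f \<longleftrightarrow> (\<exists>S. f \<in> S \<and>
     (\<forall>g\<in>S. continuous_on UNIV g \<and>
        (\<forall>b\<in>Basis. \<exists>g'\<in>S. \<forall>x. ((\<lambda>t. g (x + t *\<^sub>R b)) has_real_derivative g' x) (at 0))))"

type_synonym state = "real ^ 3"

definition Diag :: "state set" where
  "Diag = {x. x$1 = x$2 \<and> x$2 = x$3}"
definition S1 :: "state set" where "S1 = {x. x$2 = x$3}"
definition S2 :: "state set" where "S2 = {x. x$1 = x$3}"
definition S3 :: "state set" where "S3 = {x. x$1 = x$2}"

definition hvf :: "(real \<Rightarrow> real) \<Rightarrow> (real \<Rightarrow> real \<Rightarrow> real) \<Rightarrow> (real \<Rightarrow> real \<Rightarrow> real \<Rightarrow> real)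
    \<Rightarrow> state \<Rightarrow> state" where
  "hvf F G2 G3 x = vector
     [F (x$1) + G2 (x$1) (x$2) + G3 (x$1) (x$2) (x$3),
      F (x$2) + G2 (x$2) (x$1) + G3 (x$2) (x$1) (x$3),
      F (x$3) + G2 (x$3) (x$2) + G3 (x$3) (x$1) (x$2)]"

definition dyn_invariant :: "(state \<Rightarrow> state) \<Rightarrow> state set \<Rightarrow> bool" where
  "dyn_invariant V S \<longleftrightarrow> (\<forall>x\<in>S. V x \<in> S)"

definition is_eigenvalue :: "real^3^3 \<Rightarrow> complex \<Rightarrow> bool" where
  "is_eigenvalue J mu \<longleftrightarrow> (\<exists>v::complex^3. v \<noteq> 0 \<and>
      (\<chi> i j. complex_of_real (J$i$j)) *v v = mu *s v)"

definition hyperbolic_equilibrium :: "(state \<Rightarrow> state) \<Rightarrow> state \<Rightarrow> bool" where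
  "hyperbolic_equilibrium V \<xi> \<longleftrightarrow> V \<xi> = 0 \<and>
     (\<exists>J. (V has_derivative (\<lambda>h. J *v h)) (at \<xi>) \<and>
          (\<forall>mu. is_eigenvalue J mu \<longrightarrow> Re mu \<noteq> 0))"

definition is_solution :: "(state \<Rightarrow> state) \<Rightarrow> (real \<Rightarrow> state) \<Rightarrow> bool" where
  "is_solution V x \<longleftrightarrow> (\<forall>t. (x has_vector_derivative V (x t)) (at t))"

definition heteroclinic :: "(state \<Rightarrow> state) \<Rightarrow> state \<Rightarrow> state \<Rightarrow> (real \<Rightarrow> state) \<Rightarrow> bool" where
  "heteroclinic V \<xi> \<xi>' x \<longleftrightarrow> is_solution V x \<and>
     (x \<longlongrightarrow> \<xi>) at_bot \<and> (x \<longlongrightarrow> \<xi>') at_top"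

definition admissible :: "(real \<Rightarrow> real) \<Rightarrow> (real \<Rightarrow> real \<Rightarrow> real) \<Rightarrow> (real \<Rightarrow> real \<Rightarrow> real \<Rightarrow> real) \<Rightarrow> bool" where
  "admissible F G2 G3 \<longleftrightarrow>
     smooth_fun F \<and> smooth_fun (\<lambda>p::real^2. G2 (p$1) (p$2)) \<and>
     smooth_fun (\<lambda>p::real^3. G3 (p$1) (p$2) (p$3)) \<and>
     (\<exists>a b b'. G2 a b \<noteq> G2 a b') \<and>
     (\<exists>a b b' c. G3 a b c \<noteq> G3 a b' c) \<and>
     (\<exists>a b c c'. G3 a b c \<noteq> G3 a b c')"

end

theory Submission
  imports Defs "HOL-Real_Asymp.Real_Asymp"
begin
definition G2e :: "real \<Rightarrow> real \<Rightarrow> real" where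
 "G2e x y = (1/5) * (- 15*y + 140*y^2 + 15*x - 166*x*y + 150*x*y^2 + 26*x^2 - 372*x^2*y + 222*x^3 - 192*x^3*y + 192*x^4 + 180*x^4*y - 180*x^5)"
definition G3e :: "real \<Rightarrow> real \<Rightarrow> real \<Rightarrow> real" where
 "G3e x y z = (1/30) * (40*z - 420*z^2 + 40*y + 162*y*z + 96*y*z^2 - 135*y*z^3 + 27*y*z^4 - 420*y^2 + 96*y^2*z - 270*y^2*z^2 + 81*y^2*z^3 - 135*y^3*z + 81*y^3*z^2 + 27*y^4*z - 110*x + 408*x*z - 96*x*z^2 + 135*x*z^3 - 27*x*z^4 + 408*x*y - 528*x*y*z - 135*x*y*z^2 - 96*x*y^2 - 135*x*y^2*z + 54*x*y^2*z^2 + 135*x*y^3 - 27*x*y^4 - 156*x^2 + 1116*x^2*z + 405*x^2*z^2 - 81*x^2*z^3 + 1116*x^2*y - 810*x^2*y*z + 81*x^2*y*z^2 + 405*x^2*y^2 + 81*x^2*y^2*z - 81*x^2*y^3 - 1332*x^3 + 576*x^3*z - 216*x^3*z^2 + 576*x^3*y + 432*x^3*y*z - 216*x^3*y^2 - 1152*x^4 - 540*x^4*z - 540*x^4*y + 1080*x^5)"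
definition Bf :: "real \<Rightarrow> real" where "Bf u = u - 6/5*u*(1-u)^2"
definition Df :: "real \<Rightarrow> real" where "Df s = s + 6/5 * s^2 * (1-s)"


inductive pfun :: "('a::euclidean_space \<Rightarrow> real) \<Rightarrow> bool" where
  pconst: "pfun (\<lambda>x. c)"
| plin: "pfun (\<lambda>x. x \<bullet> c)"
| padd: "pfun f \<Longrightarrow> pfun g \<Longrightarrow> pfun (\<lambda>x. f x + g x)"
| pmul: "pfun f \<Longrightarrow> pfun g \<Longrightarrow> pfun (\<lambda>x. f x * g x)"

lemma pfun_cont: "pfun f \<Longrightarrow> continuous_on UNIV f"
  by (induction rule: pfun.induct) (auto intro!: continuous_intros)

lemma pfun_deriv: "pfun f \<Longrightarrow> \<exists>g'. pfun g' \<and> (\<forall>x. ((\<lambda>t. f (x + t *\<^sub>R b)) has_real_derivative g' x) (at 0))"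
proof (induction rule: pfun.induct)
  case (pconst c)
  show ?case by (rule exI[of _ "\<lambda>x. 0"]) (auto intro: pfun.intros)
next
  case (plin c)
  have "((\<lambda>t. (x + t *\<^sub>R b) \<bullet> c) has_real_derivative b \<bullet> c) (at 0)" for x
  proof -
    have e: "(\<lambda>t. (x + t *\<^sub>R b) \<bullet> c) = (\<lambda>t. x \<bullet> c + t * (b \<bullet> c))"
      by (simp add: inner_add_left)
    show ?thesis unfolding e by (auto intro!: derivative_eq_intros)
  qed
  then show ?case by (intro exI[of _ "\<lambda>x. b \<bullet> c"]) (auto intro: pfun.intros)
next
  case (padd f g)
  then obtain f' g' where "pfun f'" "pfun g'"
    "\<And>x. ((\<lambda>t. f (x + t *\<^sub>R b)) has_real_derivative f' x) (at 0)"
    "\<And>x. ((\<lambda>t. g (x + t *\<^sub>R b)) has_real_derivative g' x) (at 0)" by blast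
  then show ?case
    by (intro exI[of _ "\<lambda>x. f' x + g' x"]) (auto intro: pfun.intros DERIV_add)
next
  case (pmul f g)
  then obtain f' g' where "pfun f'" "pfun g'"
    and df: "\<And>x. ((\<lambda>t. f (x + t *\<^sub>R b)) has_real_derivative f' x) (at 0)"
    and dg: "\<And>x. ((\<lambda>t. g (x + t *\<^sub>R b)) has_real_derivative g' x) (at 0)" by blast
  have "((\<lambda>t. f (x + t *\<^sub>R b) * g (x + t *\<^sub>R b)) has_real_derivative f' x * g x + f x * g' x) (at 0)" for x
    using DERIV_mult[OF df[of x] dg[of x]] by (simp add: algebra_simps)
  moreover have "pfun (\<lambda>x. f' x * g x + f x * g' x)"
    using \<open>pfun f'\<close> \<open>pfun g'\<close> pmul.hyps by (auto intro!: pfun.intros)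
  ultimately show ?case by blast
qed

lemma pfun_smooth: "pfun f \<Longrightarrow> smooth_fun f"
  unfolding smooth_fun_def
proof (intro exI[of _ "Collect pfun"] conjI ballI)
  fix g :: "'a \<Rightarrow> real" and b :: 'a assume "g \<in> Collect pfun" "b \<in> Basis"
  then show "\<exists>g'\<in>Collect pfun. \<forall>x. ((\<lambda>t. g (x + t *\<^sub>R b)) has_real_derivative g' x) (at 0)"
    using pfun_deriv[of g b] by auto
qed (auto intro: pfun_cont)

lemma pneg: "pfun f \<Longrightarrow> pfun (\<lambda>x. - f x)"
proof -
  assume "pfun f"
  then have "pfun (\<lambda>x. (-1) * f x)" by (intro pfun.intros)
  then show ?thesis by simp
qed
lemma pdiff: "pfun f \<Longrightarrow> pfun g \<Longrightarrow> pfun (\<lambda>x. f x - g x)"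
  using padd[OF _ pneg, of f g] by simp
lemma ppow: "pfun f \<Longrightarrow> pfun (\<lambda>x. f x ^ n)"
  by (induction n) (auto intro: pfun.intros)
lemma pdivc: "pfun f \<Longrightarrow> pfun (\<lambda>x. f x / c)"
  using pmul[OF _ pconst, of f "1/c"] by simp
lemma pcoord: "pfun (\<lambda>x::real^'n. x $ i)"
  using plin[of "axis i (1::real)"] by (simp add: inner_axis inner_real_def)
lemma pid: "pfun (\<lambda>x::real. x)"
  using plin[of "1::real"] by (simp add: inner_real_def)
lemmas prules = pconst pcoord padd pmul pneg pdiff ppow pdivc

lemma smooth_F: "smooth_fun (\<lambda>x::real. 0::real)"
  by (rule pfun_smooth) (rule pconst)
lemma smooth_G2: "smooth_fun (\<lambda>p::real^2. G2e (p$1) (p$2))"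
  unfolding G2e_def by (rule pfun_smooth) (intro prules)
lemma smooth_G3: "smooth_fun (\<lambda>p::real^3. G3e (p$1) (p$2) (p$3))"
  unfolding G3e_def by (rule pfun_smooth) (intro prules)

lemma adm: "admissible (\<lambda>x. 0) G2e G3e"
  unfolding admissible_def
  apply (intro conjI smooth_F smooth_G2 smooth_G3)
    apply (rule exI[of _ 0], rule exI[of _ 0], rule exI[of _ 1], simp add: G2e_def)
   apply (rule exI[of _ 0], rule exI[of _ 0], rule exI[of _ 1], rule exI[of _ 0], simp add: G3e_def)
  apply (rule exI[of _ 0], rule exI[of _ 0], rule exI[of _ 0], rule exI[of _ 1], simp add: G3e_def)
  done

definition Bfd :: "real \<Rightarrow> real" where "Bfd u = 1 - 6/5*((1-u)^2 - 2*u*(1-u))"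
definition Dfd :: "real \<Rightarrow> real" where "Dfd u = 1 + 6/5*(2*u*(1-u) - u^2)"

lemma sym: "G3e a b c = G3e a c b" unfolding G3e_def by algebra
lemma e1: "G2e u (Bf u) + G3e u (Bf u) u = u*(1-u)" unfolding G2e_def G3e_def Bf_def by algebra
lemma e2: "G2e (Bf u) u + G3e (Bf u) u u = Bfd u * (u*(1-u))" unfolding G2e_def G3e_def Bf_def Bfd_def by algebra
lemma e3: "G2e u u + G3e u u (Df u) = - (u*(1-u))" unfolding G2e_def G3e_def Df_def by algebra
lemma e4: "G2e (Df u) u + G3e (Df u) u u = Dfd u * (-(u*(1-u)))" unfolding G2e_def G3e_def Df_def Dfd_def by algebra

lemma Bf_deriv: "(Bf has_real_derivative Bfd u) (at u)"
  unfolding Bf_def[abs_def] Bfd_def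
  by (rule derivative_eq_intros refl)+ (simp add: field_simps power2_eq_square)
lemma Df_deriv: "(Df has_real_derivative Dfd u) (at u)"
  unfolding Df_def[abs_def] Dfd_def
  by (rule derivative_eq_intros refl)+ (simp add: field_simps power2_eq_square)

definition lg :: "real \<Rightarrow> real" where "lg t = 1 / (1 + exp (- t))"

lemma lg_deriv: "(lg has_real_derivative lg t * (1 - lg t)) (at t)"
proof -
  have key: "\<And>e::real. 1 + e \<noteq> 0 \<Longrightarrow> (0*(1+e) - 1*(0 + e * -1))/((1+e)*(1+e)) = 1/(1+e)*(1-1/(1+e))"
    by (simp add: field_simps)
  have p: "1 + exp (- t) \<noteq> 0" by (metis add_pos_pos exp_gt_zero less_irrefl zero_less_one)
  show ?thesis
    unfolding lg_def[abs_def]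
    apply (rule derivative_eq_intros refl)+
     apply (rule p)
    by (rule key[OF p])
qed
lemma lg_pos: "0 < lg t" unfolding lg_def by (simp add: add_pos_pos)
lemma lg_lt1: "lg t < 1" unfolding lg_def by (simp add: add_pos_pos)
lemma lg_bot: "(lg \<longlongrightarrow> 0) at_bot" unfolding lg_def[abs_def] by real_asymp
lemma lg_top: "(lg \<longlongrightarrow> 1) at_top" unfolding lg_def[abs_def] by real_asymp
lemma lgm_bot: "((\<lambda>t. lg (-t)) \<longlongrightarrow> 1) at_bot" unfolding lg_def[abs_def] by real_asymp
lemma lgm_top: "((\<lambda>t. lg (-t)) \<longlongrightarrow> 0) at_top" unfolding lg_def[abs_def] by real_asymp

lemma vec3_eq: "(x::'a^3) = y \<longleftrightarrow> x$1 = y$1 \<and> x$2 = y$2 \<and> x$3 = y$3"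
  by (simp add: vec_eq_iff forall_3)

lemma hasderiv3: fixes f :: "'a::real_normed_vector \<Rightarrow> real^3" shows "(f has_derivative f') (at a) \<longleftrightarrow>
   (\<forall>j::3. ((\<lambda>x. f x $ j) has_derivative (\<lambda>h. f' h $ j)) (at a))"
  using has_derivative_componentwise_within[of f f' a UNIV]
  by (auto simp: Basis_vec_def inner_axis inner_real_def)

lemma vecderiv3:
  assumes "(f1 has_real_derivative d1) (at t)" "(f2 has_real_derivative d2) (at t)"
    "(f3 has_real_derivative d3) (at t)"
  shows "((\<lambda>t. vector [f1 t, f2 t, f3 t] :: real^3) has_vector_derivative vector [d1, d2, d3]) (at t)"
proof -
  have c: "\<And>d. (\<lambda>h::real. h * d) = (*) d" by (auto simp: fun_eq_iff)
  show ?thesis unfolding has_vector_derivative_def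
    by (subst hasderiv3) (use assms in \<open>auto simp: forall_3 has_field_derivative_def c\<close>)
qed

lemma vectendsto3:
  assumes "(f1 \<longlongrightarrow> a1) F" "(f2 \<longlongrightarrow> a2) F" "(f3 \<longlongrightarrow> a3) F"
  shows "((\<lambda>t. vector [f1 t, f2 t, f3 t] :: real^3) \<longlongrightarrow> vector [a1, a2, a3]) F"
  apply (rule vec_tendstoI)
  subgoal for i using assms exhaust_3[of i] by auto
  done

lemma invariance:
  assumes "\<forall>a b c. G3 a b c = G3 a c b"
  shows "dyn_invariant (hvf F G2 G3) Diag \<and> dyn_invariant (hvf F G2 G3) S2 \<and>
            dyn_invariant (hvf F G2 G3) S3"
  using assms unfolding dyn_invariant_def Diag_def S2_def S3_def hvf_def by auto

definition Xtr :: "real \<Rightarrow> real^3" where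
  "Xtr t = vector [lg t, Bf (lg t), lg t]"
definition Ytr :: "real \<Rightarrow> real^3" where
  "Ytr t = vector [lg (-t), lg (-t), Df (lg (-t))]"

lemma lgm_deriv: "((\<lambda>t. lg (-t)) has_real_derivative lg (-t) * (1 - lg (-t)) * -1) (at t)"
proof -
  have u: "((\<lambda>t. -t) has_real_derivative -1) (at t)" by (auto intro!: derivative_eq_intros)
  from DERIV_chain'[OF u lg_deriv[of "-t"]] show ?thesis by (simp add: mult.commute)
qed

lemma X_sol: "is_solution (hvf (\<lambda>x. 0) G2e G3e) Xtr"
  unfolding is_solution_def
proof
  fix t
  have d: "(Xtr has_vector_derivative vector [lg t * (1 - lg t), Bfd (lg t) * (lg t * (1 - lg t)), lg t * (1 - lg t)]) (at t)"
    unfolding Xtr_def[abs_def]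
    by (rule vecderiv3[OF lg_deriv DERIV_chain'[OF lg_deriv Bf_deriv] lg_deriv])
  have "hvf (\<lambda>x. 0) G2e G3e (Xtr t) = vector [lg t * (1 - lg t), Bfd (lg t) * (lg t * (1 - lg t)), lg t * (1 - lg t)]"
    unfolding vec3_eq by (simp add: hvf_def Xtr_def e1 e2 sym[of "lg t" "lg t"])
  then show "(Xtr has_vector_derivative hvf (\<lambda>x. 0) G2e G3e (Xtr t)) (at t)" using d by simp
qed

lemma Y_sol: "is_solution (hvf (\<lambda>x. 0) G2e G3e) Ytr"
  unfolding is_solution_def
proof
  fix t
  have d: "(Ytr has_vector_derivative vector [lg (-t) * (1 - lg (-t)) * -1, lg (-t) * (1 - lg (-t)) * -1, Dfd (lg (-t)) * (lg (-t) * (1 - lg (-t)) * -1)]) (at t)"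
    unfolding Ytr_def[abs_def]
    by (rule vecderiv3[OF lgm_deriv lgm_deriv DERIV_chain'[OF lgm_deriv Df_deriv]])
  have "hvf (\<lambda>x. 0) G2e G3e (Ytr t) = vector [lg (-t) * (1 - lg (-t)) * -1, lg (-t) * (1 - lg (-t)) * -1, Dfd (lg (-t)) * (lg (-t) * (1 - lg (-t)) * -1)]"
    unfolding vec3_eq by (simp add: hvf_def Ytr_def e3 e4)
  then show "(Ytr has_vector_derivative hvf (\<lambda>x. 0) G2e G3e (Ytr t)) (at t)" using d by simp
qed

lemma X_lim: "(Xtr \<longlongrightarrow> vector [0,0,0]) at_bot" "(Xtr \<longlongrightarrow> vector [1,1,1]) at_top"
proof -
  have "((\<lambda>t. Bf (lg t)) \<longlongrightarrow> Bf 0) at_bot" unfolding Bf_def by (intro tendsto_intros lg_bot)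
  then have c0: "((\<lambda>t. Bf (lg t)) \<longlongrightarrow> 0) at_bot" by (simp add: Bf_def)
  have "((\<lambda>t. Bf (lg t)) \<longlongrightarrow> Bf 1) at_top" unfolding Bf_def by (intro tendsto_intros lg_top)
  then have c1: "((\<lambda>t. Bf (lg t)) \<longlongrightarrow> 1) at_top" by (simp add: Bf_def)
  show "(Xtr \<longlongrightarrow> vector [0,0,0]) at_bot" unfolding Xtr_def[abs_def]
    by (rule vectendsto3[OF lg_bot c0 lg_bot])
  show "(Xtr \<longlongrightarrow> vector [1,1,1]) at_top" unfolding Xtr_def[abs_def]
    by (rule vectendsto3[OF lg_top c1 lg_top])
qed

lemma Y_lim: "(Ytr \<longlongrightarrow> vector [1,1,1]) at_bot" "(Ytr \<longlongrightarrow> vector [0,0,0]) at_top"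
proof -
  have "((\<lambda>t. Df (lg (-t))) \<longlongrightarrow> Df 1) at_bot" unfolding Df_def by (intro tendsto_intros lgm_bot)
  then have c0: "((\<lambda>t. Df (lg (-t))) \<longlongrightarrow> 1) at_bot" by (simp add: Df_def)
  have "((\<lambda>t. Df (lg (-t))) \<longlongrightarrow> Df 0) at_top" unfolding Df_def by (intro tendsto_intros lgm_top)
  then have c1: "((\<lambda>t. Df (lg (-t))) \<longlongrightarrow> 0) at_top" by (simp add: Df_def)
  show "(Ytr \<longlongrightarrow> vector [1,1,1]) at_bot" unfolding Ytr_def[abs_def]
    by (rule vectendsto3[OF lgm_bot lgm_bot c0])
  show "(Ytr \<longlongrightarrow> vector [0,0,0]) at_top" unfolding Ytr_def[abs_def]
    by (rule vectendsto3[OF lgm_top lgm_top c1])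
qed

lemma X_in: "Xtr t \<in> S2 - Diag"
proof -
  have "lg t * (1 - lg t)^2 \<noteq> 0" using lg_pos[of t] lg_lt1[of t] by simp
  then have "Bf (lg t) \<noteq> lg t" unfolding Bf_def by simp
  then show ?thesis by (simp add: Xtr_def S2_def Diag_def)
qed

lemma Y_in: "Ytr t \<in> S3 - Diag"
proof -
  have "lg (-t)^2 * (1 - lg (-t)) \<noteq> 0" using lg_pos[of "-t"] lg_lt1[of "-t"] by simp
  then have "Df (lg (-t)) \<noteq> lg (-t)" unfolding Df_def by simp
  then show ?thesis by (simp add: Ytr_def S3_def Diag_def)
qed

lemma hasderiv_nth [derivative_intros]: "((\<lambda>x::real^'n. x $ i) has_derivative (\<lambda>h. h $ i)) F"
  by (rule bounded_linear_imp_has_derivative[OF bounded_linear_vec_nth])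

definition J0 :: "real^3^3" where
  "J0 = vector [vector [-2/3, -5/3, 4/3], vector [-5/3, -2/3, 4/3], vector [4/3, -5/3, -2/3]]"
definition J1 :: "real^3^3" where
  "J1 = vector [vector [-2/3, 4/3, -5/3], vector [4/3, -2/3, -5/3], vector [-5/3, 4/3, -2/3]]"

lemma deriv0: "(hvf (\<lambda>x. 0) G2e G3e has_derivative (\<lambda>h. J0 *v h)) (at (vector [0,0,0]))"
  apply (subst hasderiv3)
  apply (simp only: forall_3 hvf_def vector_3)
  apply (intro conjI)
    apply (unfold G2e_def G3e_def)
    apply (rule has_derivative_eq_rhs, (rule derivative_intros)+)
    apply (auto simp add: fun_eq_iff matrix_vector_mult_def sum_3 J0_def field_simps)
    apply (rule has_derivative_eq_rhs, (rule derivative_intros)+)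
    apply (auto simp add: fun_eq_iff matrix_vector_mult_def sum_3 J0_def field_simps)
    apply (rule has_derivative_eq_rhs, (rule derivative_intros)+)
    apply (auto simp add: fun_eq_iff matrix_vector_mult_def sum_3 J0_def field_simps)
  done
lemma deriv1: "(hvf (\<lambda>x. 0) G2e G3e has_derivative (\<lambda>h. J1 *v h)) (at (vector [1,1,1]))"
  apply (subst hasderiv3)
  apply (simp only: forall_3 hvf_def vector_3)
  apply (intro conjI)
    apply (unfold G2e_def G3e_def)
    apply (rule has_derivative_eq_rhs, (rule derivative_intros)+)
    apply (auto simp add: fun_eq_iff matrix_vector_mult_def sum_3 J1_def field_simps)
    apply (rule has_derivative_eq_rhs, (rule derivative_intros)+)
    apply (auto simp add: fun_eq_iff matrix_vector_mult_def sum_3 J1_def field_simps)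
    apply (rule has_derivative_eq_rhs, (rule derivative_intros)+)
    apply (auto simp add: fun_eq_iff matrix_vector_mult_def sum_3 J1_def field_simps)
  done

lemma eig_core0:
  fixes a b c mu :: complex
  assumes nz: "a \<noteq> 0 \<or> b \<noteq> 0 \<or> c \<noteq> 0"
    and e1: "mu*a = (-2/3)*a + (-5/3)*b + (4/3)*c"
    and e2: "mu*b = (-5/3)*a + (-2/3)*b + (4/3)*c"
    and e3: "mu*c = (4/3)*a + (-5/3)*b + (-2/3)*c"
  shows "Re mu \<noteq> 0"
proof -
  have p1: "(mu+1)*(mu-1)*(mu+2)*a = 0" using e1 e2 e3 by algebra
  have p2: "(mu+1)*(mu-1)*(mu+2)*b = 0" using e1 e2 e3 by algebra
  have p3: "(mu+1)*(mu-1)*(mu+2)*c = 0" using e1 e2 e3 by algebra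
  from nz p1 p2 p3 have "(mu+1)*(mu-1)*(mu+2) = 0" by auto
  then have "mu + 1 = 0 \<or> mu - 1 = 0 \<or> mu + 2 = 0" by simp
  then have "mu = -1 \<or> mu = 1 \<or> mu = -2" by (metis add_eq_0_iff2 eq_iff_diff_eq_0 add.commute)
  then show ?thesis by auto
qed

lemma eigJ0: "is_eigenvalue J0 mu \<Longrightarrow> Re mu \<noteq> 0"
proof -
  assume "is_eigenvalue J0 mu"
  then obtain w :: "complex^3" where nz: "w \<noteq> 0"
    and ev: "(\<chi> i j. complex_of_real (J0$i$j)) *v w = mu *s w"
    unfolding is_eigenvalue_def by blast
  have r: "((\<chi> i j. complex_of_real (J0$i$j)) *v w)$k = (mu *s w)$k" for k using ev by simp
  have e1: "mu*w$1 = (-2/3)*w$1 + (-5/3)*w$2 + (4/3)*w$3"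
    using r[of 1] by (simp add: matrix_vector_mult_def sum_3 J0_def)
  have e2: "mu*w$2 = (-5/3)*w$1 + (-2/3)*w$2 + (4/3)*w$3"
    using r[of 2] by (simp add: matrix_vector_mult_def sum_3 J0_def)
  have e3: "mu*w$3 = (4/3)*w$1 + (-5/3)*w$2 + (-2/3)*w$3"
    using r[of 3] by (simp add: matrix_vector_mult_def sum_3 J0_def)
  have "w$1 \<noteq> 0 \<or> w$2 \<noteq> 0 \<or> w$3 \<noteq> 0" using nz by (simp add: vec3_eq)
  then show ?thesis using eig_core0 e1 e2 e3 by blast
qed
lemma eig_core1:
  fixes a b c mu :: complex
  assumes nz: "a \<noteq> 0 \<or> b \<noteq> 0 \<or> c \<noteq> 0"
    and e1: "mu*a = (-2/3)*a + (4/3)*b + (-5/3)*c"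
    and e2: "mu*b = (4/3)*a + (-2/3)*b + (-5/3)*c"
    and e3: "mu*c = (-5/3)*a + (4/3)*b + (-2/3)*c"
  shows "Re mu \<noteq> 0"
proof -
  have p1: "(mu+1)*(mu-1)*(mu+2)*a = 0" using e1 e2 e3 by algebra
  have p2: "(mu+1)*(mu-1)*(mu+2)*b = 0" using e1 e2 e3 by algebra
  have p3: "(mu+1)*(mu-1)*(mu+2)*c = 0" using e1 e2 e3 by algebra
  from nz p1 p2 p3 have "(mu+1)*(mu-1)*(mu+2) = 0" by auto
  then have "mu + 1 = 0 \<or> mu - 1 = 0 \<or> mu + 2 = 0" by simp
  then have "mu = -1 \<or> mu = 1 \<or> mu = -2" by (metis add_eq_0_iff2 eq_iff_diff_eq_0 add.commute)
  then show ?thesis by auto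
qed

lemma eigJ1: "is_eigenvalue J1 mu \<Longrightarrow> Re mu \<noteq> 0"
proof -
  assume "is_eigenvalue J1 mu"
  then obtain w :: "complex^3" where nz: "w \<noteq> 0"
    and ev: "(\<chi> i j. complex_of_real (J1$i$j)) *v w = mu *s w"
    unfolding is_eigenvalue_def by blast
  have r: "((\<chi> i j. complex_of_real (J1$i$j)) *v w)$k = (mu *s w)$k" for k using ev by simp
  have e1: "mu*w$1 = (-2/3)*w$1 + (4/3)*w$2 + (-5/3)*w$3"
    using r[of 1] by (simp add: matrix_vector_mult_def sum_3 J1_def)
  have e2: "mu*w$2 = (4/3)*w$1 + (-2/3)*w$2 + (-5/3)*w$3"
    using r[of 2] by (simp add: matrix_vector_mult_def sum_3 J1_def)
  have e3: "mu*w$3 = (-5/3)*w$1 + (4/3)*w$2 + (-2/3)*w$3"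
    using r[of 3] by (simp add: matrix_vector_mult_def sum_3 J1_def)
  have "w$1 \<noteq> 0 \<or> w$2 \<noteq> 0 \<or> w$3 \<noteq> 0" using nz by (simp add: vec3_eq)
  then show ?thesis using eig_core1 e1 e2 e3 by blast
qed

lemma hyp0: "hyperbolic_equilibrium (hvf (\<lambda>x. 0) G2e G3e) (vector [0,0,0])"
  unfolding hyperbolic_equilibrium_def
proof (intro conjI exI[of _ J0])
  show "hvf (\<lambda>x. 0) G2e G3e (vector [0, 0, 0]) = 0"
    by (simp add: hvf_def vec3_eq G2e_def G3e_def)
qed (use deriv0 eigJ0 in auto)

lemma hyp1: "hyperbolic_equilibrium (hvf (\<lambda>x. 0) G2e G3e) (vector [1,1,1])"
  unfolding hyperbolic_equilibrium_def
proof (intro conjI exI[of _ J1])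
  show "hvf (\<lambda>x. 0) G2e G3e (vector [1, 1, 1]) = 0"
    by (simp add: hvf_def vec3_eq G2e_def G3e_def)
qed (use deriv1 eigJ1 in auto)

theorem mainTheorem12:
  shows "(\<forall>F G2 G3. admissible F G2 G3 \<and> (\<forall>a b c. G3 a b c = G3 a c b) \<longrightarrow>
            dyn_invariant (hvf F G2 G3) Diag \<and> dyn_invariant (hvf F G2 G3) S2 \<and>
            dyn_invariant (hvf F G2 G3) S3)
       \<and> (\<exists>F G2 G3. admissible F G2 G3 \<and> (\<forall>a b c. G3 a b c = G3 a c b) \<and>
            (\<exists>\<xi>1 \<xi>2 x y. \<xi>1 \<in> Diag \<and> \<xi>2 \<in> Diag \<and> \<xi>1 \<noteq> \<xi>2 \<and>
               hyperbolic_equilibrium (hvf F G2 G3) \<xi>1 \<and>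
               hyperbolic_equilibrium (hvf F G2 G3) \<xi>2 \<and>
               heteroclinic (hvf F G2 G3) \<xi>1 \<xi>2 x \<and> (\<forall>t. x t \<in> S2 - Diag) \<and>
               heteroclinic (hvf F G2 G3) \<xi>2 \<xi>1 y \<and> (\<forall>t. y t \<in> S3 - Diag)))"
proof (intro conjI)
  show "\<forall>F G2 G3. admissible F G2 G3 \<and> (\<forall>a b c. G3 a b c = G3 a c b) \<longrightarrow>
            dyn_invariant (hvf F G2 G3) Diag \<and> dyn_invariant (hvf F G2 G3) S2 \<and>
            dyn_invariant (hvf F G2 G3) S3"
    using invariance by blast
  have d0: "(vector [0,0,0] :: real^3) \<in> Diag" and d1: "(vector [1,1,1] :: real^3) \<in> Diag"
    by (simp_all add: Diag_def)
  have ne: "(vector [0,0,0] :: real^3) \<noteq> vector [1,1,1]" by (simp add: vec3_eq)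
  have h1: "heteroclinic (hvf (\<lambda>x. 0) G2e G3e) (vector [0,0,0]) (vector [1,1,1]) Xtr"
    unfolding heteroclinic_def using X_sol X_lim by blast
  have h2: "heteroclinic (hvf (\<lambda>x. 0) G2e G3e) (vector [1,1,1]) (vector [0,0,0]) Ytr"
    unfolding heteroclinic_def using Y_sol Y_lim by blast
  have sy: "\<forall>a b c. G3e a b c = G3e a c b" using sym by blast
  show "\<exists>F G2 G3. admissible F G2 G3 \<and> (\<forall>a b c. G3 a b c = G3 a c b) \<and>
            (\<exists>\<xi>1 \<xi>2 x y. \<xi>1 \<in> Diag \<and> \<xi>2 \<in> Diag \<and> \<xi>1 \<noteq> \<xi>2 \<and>
               hyperbolic_equilibrium (hvf F G2 G3) \<xi>1 \<and>
               hyperbolic_equilibrium (hvf F G2 G3) \<xi>2 \<and>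
               heteroclinic (hvf F G2 G3) \<xi>1 \<xi>2 x \<and> (\<forall>t. x t \<in> S2 - Diag) \<and>
               heteroclinic (hvf F G2 G3) \<xi>2 \<xi>1 y \<and> (\<forall>t. y t \<in> S3 - Diag))"
    using adm sy d0 d1 ne hyp0 hyp1 h1 h2 X_in Y_in by blast
qed
end
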